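(* Let $\mathfrak L$ be a complete lattice, $f:\mathfrak L\to\mathfrak L$ monotone, write $\nu^\alpha$ for $\nu^\alpha f$, let $\phi:\mathcal O\to\mathcal O$ and let $\lambda\in\mathcal O$ be a nonzero limit ordinal. Then $\limsup_{\alpha\to\lambda}\nu^{\phi(\alpha)}=\nu^{\liminf_\lambda\phi}$.
   Context: $\mathcal O$ is the set of ordinals $\le\top_{\mathsf{ord}}$ for a fixed ordinal $\top_{\mathsf{ord}}$ ($=\beth_\omega$), a complete lattice. For $g:\mathcal O\to\mathfrak L$ into a complete lattice: $\liminf_\lambda g=\liminf_{\alpha\to\lambda}g(\alpha)=\sup_{\alpha_0<\lambda}\inf_{\alpha_0\le\alpha<\lambda}g(\alpha)$, $\limsup_{\alpha\to\lambda}g(\alpha)=\inf_{\alpha_0<\lambda}\sup_{\alpha_0\le\alpha<\lambda}g(\alpha)$. For $f:\mathfrak L\to\mathfrak L$ and $g\in\mathfrak L$: $f^0(g)=g$, $f^{\alpha+1}(g)=f(f^\alpha(g))$, $f^\lambda(g)=\limsup_{\alpha\to\lambda}f^\alpha(g)$; $\nu^\alpha f:=f^\alpha(\top)$. *)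

theory Defs
  imports Main
begin

text \<open>Ordinals are modelled by a type 'o that is both well-ordered and a complete
lattice (exactly the initial segments of ordinals with a top element, such as
the ordinals up to beth_omega).\<close>

definition liminf_at :: "('o::wellorder \<Rightarrow> 'L::complete_lattice) \<Rightarrow> 'o \<Rightarrow> 'L" where
  "liminf_at g l = (SUP a0\<in>{..<l}. INF a\<in>{a0..<l}. g a)"

definition limsup_at :: "('o::wellorder \<Rightarrow> 'L::complete_lattice) \<Rightarrow> 'o \<Rightarrow> 'L" where
  "limsup_at g l = (INF a0\<in>{..<l}. SUP a\<in>{a0..<l}. g a)"

text \<open>Transfinite iteration: f^0 g = g, f^(a+1) g = f (f^a g),
  f^l g = limsup_(a -> l) f^a g at nonzero limits l.
  An ordinal a is a successor iff the set of ordinals below it has a greatest element.\<close>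

definition trans_iter ::
  "('L::complete_lattice \<Rightarrow> 'L) \<Rightarrow> 'L \<Rightarrow> 'o::{wellorder,complete_lattice} \<Rightarrow> 'L" where
  "trans_iter f g = wfrec {(x, y). x < y}
     (\<lambda>r a. if a = bot then g
            else if (\<exists>b<a. \<forall>c<a. c \<le> b) then f (r (GREATEST b. b < a))
            else limsup_at r a)"

definition nu :: "('L::complete_lattice \<Rightarrow> 'L) \<Rightarrow> 'o::{wellorder,complete_lattice} \<Rightarrow> 'L" where
  "nu f a = trans_iter f top a"

end

theory Submission
  imports Defs
begin

lemma ti_unfold:
  fixes a :: "'o::{wellorder,complete_lattice}"
  shows "trans_iter f g a = (if a = bot then g
     else if (\<exists>b<a. \<forall>c<a. c \<le> b) then f (trans_iter f g (GREATEST b. b < a))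
     else limsup_at (trans_iter f g) a)"
proof -
  have W: "wf {(x, y). x < (y::'o)}" by (rule wf)
  have L: "limsup_at (cut (trans_iter f g) {(x, y). x < y} a) a = limsup_at (trans_iter f g) a"
    unfolding limsup_at_def
    by (intro INF_cong SUP_cong refl) (auto simp: cut_apply)
  have G: "(\<exists>b<a. \<forall>c<a. c \<le> b) \<Longrightarrow> (GREATEST b. b < a) < a"
  proof -
    assume "\<exists>b<a. \<forall>c<a. c \<le> b"
    then obtain b where "b < a" "\<forall>c<a. c \<le> b" by blast
    then have "(GREATEST b. b < a) = b" by (intro Greatest_equality) auto
    with \<open>b < a\<close> show ?thesis by simp
  qed
  show ?thesis
    unfolding trans_iter_def
    apply (subst wfrec[OF W])
    using L G unfolding trans_iter_def by (auto simp: cut_apply)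
qed

lemma ti_bot: "trans_iter f g (bot::'o::{wellorder,complete_lattice}) = g"
  by (subst ti_unfold) simp

lemma ti_succ:
  fixes a b :: "'o::{wellorder,complete_lattice}"
  assumes "b < a" "\<forall>c<a. c \<le> b"
  shows "trans_iter f g a = f (trans_iter f g b)"
proof -
  have "(GREATEST b. b < a) = b" using assms by (intro Greatest_equality) auto
  moreover have "a \<noteq> bot" using assms by auto
  ultimately show ?thesis using assms by (subst ti_unfold) auto
qed

lemma ti_lim:
  fixes a :: "'o::{wellorder,complete_lattice}"
  assumes "a \<noteq> bot" "\<not> (\<exists>b<a. \<forall>c<a. c \<le> b)"
  shows "trans_iter f g a = limsup_at (trans_iter f g) a"
  using assms by (subst ti_unfold) auto

lemma nu_aux:
  fixes f :: "'L::complete_lattice \<Rightarrow> 'L"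
  assumes mono: "mono f"
  shows "(\<forall>b<a. nu f a \<le> nu f b) \<and> f (nu f a) \<le> nu f (a::'o::{wellorder,complete_lattice})"
proof (induction a rule: less_induct)
  case (less a)
  note IH = less.IH
  show ?case
  proof (cases "a = bot")
    case True
    then show ?thesis by (simp add: nu_def ti_bot)
  next
    case nb: False
    show ?thesis
    proof (cases "\<exists>b<a. \<forall>c<a. c \<le> b")
      case True
      then obtain p where p: "p < a" "\<forall>c<a. c \<le> p" by blast
      have Ta: "nu f a = f (nu f p)" unfolding nu_def by (rule ti_succ[OF p])
      have h: "f (nu f p) \<le> nu f p" using IH[OF p(1)] by blast
      have 1: "\<forall>b<a. nu f a \<le> nu f b"
      proof (intro allI impI)
        fix b assume "b < a"
        then have "b \<le> p" using p by auto
        then have "nu f p \<le> nu f b"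
          using IH[OF p(1)] by (cases "b = p") auto
        then show "nu f a \<le> nu f b" using Ta h by simp
      qed
      have "f (nu f a) \<le> nu f a" using Ta h mono by (simp add: monoD)
      with 1 show ?thesis by blast
    next
      case False
      have Ta: "nu f a = limsup_at (nu f) a" unfolding nu_def
        by (rule ti_lim[OF nb False])
      have S: "(SUP x\<in>{c..<a}. nu f x) = nu f c" if "c < a" for c
      proof (rule antisym)
        show "(SUP x\<in>{c..<a}. nu f x) \<le> nu f c"
        proof (rule SUP_least)
          fix x assume "x \<in> {c..<a}"
          then have "c \<le> x" "x < a" by auto
          then show "nu f x \<le> nu f c" using IH[of x] by (cases "c = x") auto
        qed
        show "nu f c \<le> (SUP x\<in>{c..<a}. nu f x)" using that by (intro SUP_upper) auto
      qed
      have Ta2: "nu f a = (INF c\<in>{..<a}. nu f c)"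
        unfolding Ta limsup_at_def by (intro INF_cong refl) (auto simp: S)
      have 1: "\<forall>b<a. nu f a \<le> nu f b"
        using Ta2 by (auto intro: INF_lower)
      have "f (nu f a) \<le> nu f a"
      proof -
        have "f (nu f a) \<le> nu f c" if "c < a" for c
        proof -
          have "f (nu f a) \<le> f (nu f c)" using 1 that mono by (simp add: monoD)
          also have "\<dots> \<le> nu f c" using IH[OF that] by blast
          finally show ?thesis .
        qed
        then have "f (nu f a) \<le> (INF c\<in>{..<a}. nu f c)" by (simp add: le_INF_iff)
        then show "f (nu f a) \<le> nu f a" using Ta2 by simp
      qed
      with 1 show ?thesis by blast
    qed
  qed
qed

lemma nu_anti:
  assumes "mono f" "(b::'o::{wellorder,complete_lattice}) \<le> a"
  shows "nu f a \<le> nu f b"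
  using nu_aux[OF assms(1), of a] assms(2) by (cases "a = b") auto

lemma nu_lim_inf:
  fixes a :: "'o::{wellorder,complete_lattice}"
  assumes mono: "mono f" and "a \<noteq> bot" "\<not> (\<exists>b<a. \<forall>c<a. c \<le> b)"
  shows "nu f a = (INF c\<in>{..<a}. nu f c)"
proof -
  have Ta: "nu f a = limsup_at (nu f) a" unfolding nu_def
    by (rule ti_lim[OF assms(2,3)])
  have S: "(SUP x\<in>{c..<a}. nu f x) = nu f c" if "c < a" for c
  proof (rule antisym)
    show "(SUP x\<in>{c..<a}. nu f x) \<le> nu f c"
      by (rule SUP_least) (auto intro: nu_anti[OF mono])
    show "nu f c \<le> (SUP x\<in>{c..<a}. nu f x)" using that by (intro SUP_upper) auto
  qed
  show ?thesis
    unfolding Ta limsup_at_def by (intro INF_cong refl) (auto simp: S)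
qed

lemma Inf_mem:
  fixes S :: "'o::{wellorder,complete_lattice} set"
  assumes "S \<noteq> {}"
  shows "Inf S \<in> S"
proof -
  obtain s where s: "s \<in> S" using assms by blast
  let ?m = "LEAST x. x \<in> S"
  have m: "?m \<in> S" using s by (rule LeastI)
  have "?m \<le> Inf S" by (rule Inf_greatest) (auto intro: Least_le)
  moreover have "Inf S \<le> ?m" using m by (rule Inf_lower)
  ultimately show ?thesis using m by simp
qed

lemma nu_Sup:
  fixes S :: "'o::{wellorder,complete_lattice} set"
  assumes mono: "mono f" and ne: "S \<noteq> {}"
  shows "nu f (Sup S) = (INF s\<in>S. nu f s)"
proof (cases "Sup S \<in> S")
  case True
  show ?thesis
  proof (rule antisym)
    show "nu f (Sup S) \<le> (INF s\<in>S. nu f s)"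
      by (rule INF_greatest) (auto intro: nu_anti[OF mono] Sup_upper)
    show "(INF s\<in>S. nu f s) \<le> nu f (Sup S)" using True by (rule INF_lower)
  qed
next
  case False
  have lt: "s < Sup S" if "s \<in> S" for s
    using that False Sup_upper[OF that] by (cases "s = Sup S") auto
  have nb: "Sup S \<noteq> bot" using ne lt by fastforce
  have ng: "\<not> (\<exists>b<Sup S. \<forall>c<Sup S. c \<le> b)"
  proof
    assume "\<exists>b<Sup S. \<forall>c<Sup S. c \<le> b"
    then obtain b where b: "b < Sup S" "\<forall>c<Sup S. c \<le> b" by blast
    then have "Sup S \<le> b" by (intro Sup_least) (auto simp: lt)
    with b(1) show False by simp
  qed
  have E: "nu f (Sup S) = (INF c\<in>{..<Sup S}. nu f c)" by (rule nu_lim_inf[OF mono nb ng])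
  show ?thesis
    unfolding E
  proof (rule antisym)
    show "(INF c\<in>{..<Sup S}. nu f c) \<le> (INF s\<in>S. nu f s)"
      by (rule INF_greatest) (auto intro: INF_lower lt)
    show "(INF s\<in>S. nu f s) \<le> (INF c\<in>{..<Sup S}. nu f c)"
    proof (rule INF_greatest)
      fix c assume "c \<in> {..<Sup S}"
      then have c: "c < Sup S" by simp
      have "\<exists>s\<in>S. c < s"
      proof (rule ccontr)
        assume "\<not> (\<exists>s\<in>S. c < s)"
        then have "Sup S \<le> c" by (intro Sup_least) (auto simp: not_less)
        with c show False by simp
      qed
      then obtain s where "s \<in> S" "c < s" by blast
      then have "(INF s\<in>S. nu f s) \<le> nu f s" by (intro INF_lower)
      also have "\<dots> \<le> nu f c" using \<open>c < s\<close> by (intro nu_anti[OF mono]) simp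
      finally show "(INF s\<in>S. nu f s) \<le> nu f c" .
    qed
  qed
qed

theorem corollary4p14:
  fixes f :: "'L::complete_lattice \<Rightarrow> 'L"
    and \<phi> :: "'o::{wellorder,complete_lattice} \<Rightarrow> 'o"
    and l :: 'o
  assumes "mono f"
    and "l \<noteq> bot"
    and "\<forall>b<l. \<exists>c. b < c \<and> c < l"
  shows "limsup_at (\<lambda>a. nu f (\<phi> a)) l = nu f (liminf_at \<phi> l)"
proof -
  note mono = assms(1)
  define m where "m a0 = (INF a\<in>{a0..<l}. \<phi> a)" for a0
  have S: "(SUP a\<in>{a0..<l}. nu f (\<phi> a)) = nu f (m a0)" if "a0 < l" for a0
  proof -
    have "\<phi> ` {a0..<l} \<noteq> {}" using that by auto
    from Inf_mem[OF this] obtain a1 where a1: "a1 \<in> {a0..<l}" "m a0 = \<phi> a1"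
      unfolding m_def by auto
    show ?thesis
    proof (rule antisym)
      show "(SUP a\<in>{a0..<l}. nu f (\<phi> a)) \<le> nu f (m a0)"
        by (rule SUP_least) (auto intro!: nu_anti[OF mono] simp: m_def intro: INF_lower)
      show "nu f (m a0) \<le> (SUP a\<in>{a0..<l}. nu f (\<phi> a))"
        using a1 by (auto intro: SUP_upper)
    qed
  qed
  have ne: "m ` {..<l} \<noteq> {}" using assms(2) bot.not_eq_extremum by auto
  have "limsup_at (\<lambda>a. nu f (\<phi> a)) l = (INF a0\<in>{..<l}. nu f (m a0))"
    unfolding limsup_at_def by (intro INF_cong refl) (auto simp: S)
  also have "\<dots> = (INF s\<in>m ` {..<l}. nu f s)" by (simp add: image_image)
  also have "\<dots> = nu f (Sup (m ` {..<l}))" by (rule nu_Sup[OF mono ne, symmetric])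
  also have "Sup (m ` {..<l}) = liminf_at \<phi> l" unfolding liminf_at_def m_def by simp
  finally show ?thesis .
qed

end
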